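(* Let $W$ be a finite Weyl group, $w\in W$, and $U\subseteq V$ a subspace. If $\mathcal{I}(w)$ is supersolvable, then $\mathcal{I}(\mathrm{fl}_U(w))$ is supersolvable.
   Context: $W$ is a finite Weyl group with root system $R\subset V$, positive roots $R^+$, negative roots $R^-$; $I(w)=\{\alpha\in R^+:w^{-1}\alpha\in R^-\}$, $\mathcal{I}(w)$ the arrangement of hyperplanes $\ker\alpha$, $\alpha\in I(w)$. $R_U=R\cap U$ is a root system with Weyl group $W_U$; $\mathrm{fl}_U(w)\in W_U$ is the unique element whose inversion set (w.r.t. positive roots $R^+\cap U$) is $I(w)\cap U$. A central arrangement is supersolvable if its intersection lattice (flats ordered by reverse inclusion) has a maximal chain of modular elements, where a flat $X$ is modular if $\mathrm{rk}(X)+\mathrm{rk}(Y)=\mathrm{rk}(X\wedge Y)+\mathrm{rk}(X\vee Y)$ for all flats $Y$. *)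

theory Defs
  imports "HOL-Analysis.Analysis"
begin

definition refl :: "'a::euclidean_space \<Rightarrow> 'a \<Rightarrow> 'a" where
  "refl \<alpha> x = x - (2 * (x \<bullet> \<alpha>) / (\<alpha> \<bullet> \<alpha>)) *\<^sub>R \<alpha>"

text \<open>A finite, reduced, crystallographic root system in the ambient Euclidean space V
  (not required to span V).\<close>
definition root_system :: "'a::euclidean_space set \<Rightarrow> bool" where
  "root_system R \<longleftrightarrow> finite R \<and> 0 \<notin> R
     \<and> (\<forall>\<alpha>\<in>R. \<forall>\<beta>\<in>R. refl \<alpha> \<beta> \<in> R)
     \<and> (\<forall>\<alpha>\<in>R. \<forall>\<beta>\<in>R. 2 * (\<beta> \<bullet> \<alpha>) / (\<alpha> \<bullet> \<alpha>) \<in> \<int>)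
     \<and> (\<forall>\<alpha>\<in>R. \<forall>c::real. c *\<^sub>R \<alpha> \<in> R \<longrightarrow> c = 1 \<or> c = -1)"

definition positive_system :: "'a::euclidean_space set \<Rightarrow> 'a set \<Rightarrow> bool" where
  "positive_system R P \<longleftrightarrow>
     (\<exists>c. (\<forall>\<alpha>\<in>R. c \<bullet> \<alpha> \<noteq> 0) \<and> P = {\<alpha>\<in>R. c \<bullet> \<alpha> > 0})"

inductive_set weyl :: "'a::euclidean_space set \<Rightarrow> ('a \<Rightarrow> 'a) set" for R where
  weyl_id: "id \<in> weyl R"
| weyl_step: "\<alpha> \<in> R \<Longrightarrow> w \<in> weyl R \<Longrightarrow> refl \<alpha> \<circ> w \<in> weyl R"

definition inv_set :: "'a::euclidean_space set \<Rightarrow> ('a \<Rightarrow> 'a) \<Rightarrow> 'a set" where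
  "inv_set P w = {\<alpha>\<in>P. inv w \<alpha> \<in> uminus ` P}"

definition flat_U :: "'a::euclidean_space set \<Rightarrow> 'a set \<Rightarrow> 'a set \<Rightarrow> ('a \<Rightarrow> 'a) \<Rightarrow> ('a \<Rightarrow> 'a)" where
  "flat_U R P U w = (THE v. v \<in> weyl (R \<inter> U) \<and> inv_set (P \<inter> U) v = inv_set P w \<inter> U)"

definition hyperplane :: "'a::euclidean_space \<Rightarrow> 'a set" where
  "hyperplane \<alpha> = {x. \<alpha> \<bullet> x = 0}"

definition inv_arrangement :: "'a::euclidean_space set \<Rightarrow> ('a \<Rightarrow> 'a) \<Rightarrow> 'a set set" where
  "inv_arrangement P w = hyperplane ` inv_set P w"

definition flats :: "'a::euclidean_space set set \<Rightarrow> 'a set set" where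
  "flats A = {\<Inter>S | S. S \<subseteq> A}"

definition rk :: "'a::euclidean_space set \<Rightarrow> nat" where
  "rk X = DIM('a) - dim X"

text \<open>Lattice operations w.r.t. reverse inclusion: join is intersection,
  meet is the smallest flat containing both.\<close>
definition flat_join :: "'a::euclidean_space set \<Rightarrow> 'a set \<Rightarrow> 'a set" where
  "flat_join X Y = X \<inter> Y"

definition flat_meet :: "'a::euclidean_space set set \<Rightarrow> 'a set \<Rightarrow> 'a set \<Rightarrow> 'a set" where
  "flat_meet A X Y = \<Inter>{Z \<in> flats A. X \<union> Y \<subseteq> Z}"

definition modular_flat :: "'a::euclidean_space set set \<Rightarrow> 'a set \<Rightarrow> bool" where
  "modular_flat A X \<longleftrightarrow> X \<in> flats A \<and>
     (\<forall>Y\<in>flats A. rk X + rk Y = rk (flat_meet A X Y) + rk (flat_join X Y))"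

definition flat_chain :: "'a set set \<Rightarrow> bool" where
  "flat_chain C \<longleftrightarrow> (\<forall>X\<in>C. \<forall>Y\<in>C. X \<subseteq> Y \<or> Y \<subseteq> X)"

definition maximal_chain :: "'a::euclidean_space set set \<Rightarrow> 'a set set \<Rightarrow> bool" where
  "maximal_chain A C \<longleftrightarrow> C \<subseteq> flats A \<and> flat_chain C \<and>
     (\<forall>C'. C \<subseteq> C' \<and> C' \<subseteq> flats A \<and> flat_chain C' \<longrightarrow> C' = C)"

definition supersolvable :: "'a::euclidean_space set set \<Rightarrow> bool" where
  "supersolvable A \<longleftrightarrow> (\<exists>C. maximal_chain A C \<and> (\<forall>X\<in>C. modular_flat A X))"

end

theory Submission
  imports Defs
begin


lemma refl_eq: "refl a x = x - (2 * (x \<bullet> a) / (a \<bullet> a)) *\<^sub>R a"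
  by (simp add: refl_def)

lemma refl_inner: assumes "a \<noteq> 0" shows "refl a x \<bullet> refl a y = x \<bullet> y"
proof -
  have aa: "a \<bullet> a \<noteq> 0" using assms by simp
  define kx where "kx = 2 * (x \<bullet> a) / (a \<bullet> a)"
  define ky where "ky = 2 * (y \<bullet> a) / (a \<bullet> a)"
  have e: "refl a x \<bullet> refl a y = x \<bullet> y - ky * (x \<bullet> a) - kx * (a \<bullet> y) + kx * ky * (a \<bullet> a)"
    unfolding refl_eq kx_def[symmetric] ky_def[symmetric]
    by (simp add: inner_diff_left inner_diff_right algebra_simps)
  have "kx * ky * (a \<bullet> a) = 2 * (y \<bullet> a) * kx"
    unfolding kx_def ky_def using aa by (simp add: field_simps)
  moreover have "ky * (x \<bullet> a) = kx * (y \<bullet> a)"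
    unfolding kx_def ky_def by simp
  ultimately show ?thesis using e by (simp add: inner_commute)
qed

lemma refl_refl: assumes "a \<noteq> 0" shows "refl a (refl a x) = x"
proof -
  have aa: "a \<bullet> a \<noteq> 0" using assms by simp
  define kx where "kx = 2 * (x \<bullet> a) / (a \<bullet> a)"
  have "refl a x \<bullet> a = x \<bullet> a - kx * (a \<bullet> a)" unfolding refl_eq kx_def[symmetric]
    by (simp add: inner_diff_left)
  also have "\<dots> = - (x \<bullet> a)" unfolding kx_def using aa by simp
  finally have "refl a (refl a x) = refl a x + (2 * (x \<bullet> a) / (a \<bullet> a)) *\<^sub>R a"
    by (simp add: refl_eq[of a "refl a x"])
  then show ?thesis by (simp add: refl_eq)
qed

lemma refl_self: assumes "a \<noteq> 0" shows "refl a a = - a"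
proof -
  have aa: "a \<bullet> a \<noteq> 0" using assms by simp
  show ?thesis unfolding refl_eq using aa by (simp add: scaleR_2)
qed

lemma refl_uminus: "refl (- a) = refl a"
  by (rule ext) (simp add: refl_eq)

lemma refl_linear: "linear (refl a)"
proof (rule linearI)
  fix x y :: 'a
  have "2 * ((x + y) \<bullet> a) / (a \<bullet> a) = 2 * (x \<bullet> a) / (a \<bullet> a) + 2 * (y \<bullet> a) / (a \<bullet> a)"
    by (simp add: inner_add_left add_divide_distrib distrib_left)
  then show "refl a (x + y) = refl a x + refl a y"
    unfolding refl_eq by (simp add: scaleR_add_left)
next
  fix r :: real and x :: 'a
  have "2 * ((r *\<^sub>R x) \<bullet> a) / (a \<bullet> a) = r * (2 * (x \<bullet> a) / (a \<bullet> a))"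
    by simp
  then show "refl a (r *\<^sub>R x) = r *\<^sub>R refl a x"
    unfolding refl_eq by (simp add: scaleR_diff_right)
qed

lemma refl_orth: "a \<noteq> 0 \<Longrightarrow> orthogonal_transformation (refl a)"
  unfolding orthogonal_transformation_def using refl_linear refl_inner by blast

lemma refl_conj:
  assumes z: "orthogonal_transformation z"
  shows "refl (z b) (z x) = z (refl b x)"
proof -
  have l: "linear z" using z orthogonal_transformation_def by blast
  have i: "\<And>u v. z u \<bullet> z v = u \<bullet> v" using z orthogonal_transformation_def by blast
  show ?thesis unfolding refl_eq using i linear_diff[OF l] linear_scale[OF l] by simp
qed

fun wd :: "'a::euclidean_space list \<Rightarrow> 'a \<Rightarrow> 'a" where
  "wd [] = id"
| "wd (a # l) = refl a \<circ> wd l"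

lemma wd_append: "wd (l1 @ l2) = wd l1 \<circ> wd l2"
  by (induction l1) auto

lemma wd_orth: "0 \<notin> set l \<Longrightarrow> orthogonal_transformation (wd l)"
proof (induction l)
  case Nil then show ?case by (simp add: id_def)
next
  case (Cons a l) then show ?case
    unfolding wd.simps by (intro orthogonal_transformation_compose refl_orth) auto
qed

lemma wd_rev: "0 \<notin> set l \<Longrightarrow> wd (rev l) \<circ> wd l = id \<and> wd l \<circ> wd (rev l) = id"
proof (induction l)
  case Nil then show ?case by simp
next
  case (Cons a l)
  have a: "a \<noteq> 0" using Cons.prems by simp
  have l0: "0 \<notin> set l" using Cons.prems by simp
  have IH: "wd (rev l) \<circ> wd l = id" "wd l \<circ> wd (rev l) = id" using Cons.IH[OF l0] by blast+
  have rr: "refl a \<circ> refl a = id" using refl_refl[OF a] by (auto simp: fun_eq_iff)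
  have "wd (rev (a#l)) \<circ> wd (a#l) = wd (rev l) \<circ> (refl a \<circ> refl a) \<circ> wd l"
    by (simp add: wd_append comp_assoc)
  also have "\<dots> = id" using rr IH by simp
  finally have 1: "wd (rev (a#l)) \<circ> wd (a#l) = id" .
  have "wd (a#l) \<circ> wd (rev (a#l)) = refl a \<circ> (wd l \<circ> wd (rev l)) \<circ> refl a"
    by (simp add: wd_append comp_assoc)
  also have "\<dots> = id" using rr IH by (simp add: comp_assoc)
  finally have 2: "wd (a#l) \<circ> wd (rev (a#l)) = id" .
  show ?case using 1 2 by (rule conjI)
qed

lemma wd_rev_app: assumes "0 \<notin> set l" shows "wd (rev l) (wd l x) = x"
proof -
  have "wd (rev l) \<circ> wd l = id" using wd_rev[OF assms] by (rule conjunct1)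
  then show ?thesis by (rule pointfree_idE)
qed

lemma wd_rev_app2: assumes "0 \<notin> set l" shows "wd l (wd (rev l) x) = x"
proof -
  have "wd l \<circ> wd (rev l) = id" using wd_rev[OF assms] by (rule conjunct2)
  then show ?thesis by (rule pointfree_idE)
qed

lemma wd_in: "(\<And>a b. a \<in> R \<Longrightarrow> b \<in> R \<Longrightarrow> refl a b \<in> R) \<Longrightarrow> set l \<subseteq> R \<Longrightarrow> x \<in> R \<Longrightarrow> wd l x \<in> R"
  by (induction l) auto

lemma weyl_wd: "v \<in> weyl R \<Longrightarrow> \<exists>l. set l \<subseteq> R \<and> v = wd l"
proof (induction rule: weyl.induct)
  case weyl_id then show ?case by (intro exI[of _ "[]"]) simp
next
  case (weyl_step \<alpha> w)
  then obtain l where "set l \<subseteq> R" "w = wd l" by blast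
  then show ?case using weyl_step by (intro exI[of _ "\<alpha> # l"]) simp
qed

lemma wd_weyl: "set l \<subseteq> R \<Longrightarrow> wd l \<in> weyl R"
  by (induction l) (auto intro: weyl.intros)




locale psys =
  fixes R P :: "'a::euclidean_space set" and c :: 'a
  assumes fin: "finite R" and nz: "0 \<notin> R"
    and cl: "\<And>a b. a \<in> R \<Longrightarrow> b \<in> R \<Longrightarrow> refl a b \<in> R"
    and integ: "\<And>a b. a \<in> R \<Longrightarrow> b \<in> R \<Longrightarrow> 2 * (b \<bullet> a) / (a \<bullet> a) \<in> \<int>"
    and red: "\<And>a t. a \<in> R \<Longrightarrow> t *\<^sub>R a \<in> R \<Longrightarrow> t = 1 \<or> t = -1"
    and gen: "\<And>a. a \<in> R \<Longrightarrow> c \<bullet> a \<noteq> 0"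
    and Pdef: "P = {a \<in> R. c \<bullet> a > 0}"
begin

lemma negR: "a \<in> R \<Longrightarrow> - a \<in> R"
  using cl[of a a] refl_self[of a] nz by force

lemma PR: "P \<subseteq> R" using Pdef by blast

lemma Ppos: "a \<in> P \<Longrightarrow> c \<bullet> a > 0" using Pdef by blast

lemma Rcases: "a \<in> R \<Longrightarrow> a \<notin> P \<Longrightarrow> - a \<in> P"
  using Pdef gen negR by force

lemma Pneg: "a \<in> P \<Longrightarrow> - a \<notin> P"
  using Pdef by auto

lemma nz': "a \<in> R \<Longrightarrow> a \<noteq> 0" using nz by blast

lemma Pind[consumes 1, case_names step]:
  assumes "b \<in> P" and step: "\<And>b. b \<in> P \<Longrightarrow> (\<And>g. g \<in> P \<Longrightarrow> c \<bullet> g < c \<bullet> b \<Longrightarrow> Q g) \<Longrightarrow> Q b"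
  shows "Q b"
  using assms(1)
proof (induction "card {g\<in>P. c \<bullet> g < c \<bullet> b}" arbitrary: b rule: less_induct)
  case less
  show ?case
  proof (rule step[OF less.prems])
    fix g assume g: "g \<in> P" "c \<bullet> g < c \<bullet> b"
    have "{h\<in>P. c \<bullet> h < c \<bullet> g} \<subset> {h\<in>P. c \<bullet> h < c \<bullet> b}" using g by auto
    moreover have "finite {h\<in>P. c \<bullet> h < c \<bullet> b}" using fin PR by (auto intro: finite_subset)
    ultimately have "card {h\<in>P. c \<bullet> h < c \<bullet> g} < card {h\<in>P. c \<bullet> h < c \<bullet> b}" by (rule psubset_card_mono[rotated])
    then show "Q g" using less.hyps g(1) by blast
  qed
qed

definition simple :: "'a set" where
  "simple = {a \<in> P. \<not> (\<exists>b\<in>P. \<exists>g\<in>P. a = b + g)}"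

lemma simpleP: "simple \<subseteq> P" unfolding simple_def by blast

lemma simple_fin: "finite simple" using fin simpleP PR by (auto intro: finite_subset)

lemma cone: "b \<in> P \<Longrightarrow> \<exists>f. (\<forall>d. 0 \<le> f d) \<and> b = (\<Sum>d\<in>simple. f d *\<^sub>R d)"
proof (induction rule: Pind)
  case (step b)
  show ?case
  proof (cases "b \<in> simple")
    case True
    have "(\<Sum>d\<in>simple. (if d = b then 1 else 0) *\<^sub>R d) = b"
      using True simple_fin by (simp add: if_distrib[of "\<lambda>t. t *\<^sub>R _"] cong: if_cong)
    then show ?thesis by (intro exI[of _ "\<lambda>d. if d = b then 1 else 0"]) auto
  next
    case False
    then obtain b1 b2 where bb: "b1 \<in> P" "b2 \<in> P" "b = b1 + b2" using step unfolding simple_def by blast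
    have "c \<bullet> b1 < c \<bullet> b" "c \<bullet> b2 < c \<bullet> b" using bb Ppos[of b1] Ppos[of b2] by (auto simp: inner_add_right)
    then obtain f1 f2 where f1: "\<forall>d. 0 \<le> f1 d" "b1 = (\<Sum>d\<in>simple. f1 d *\<^sub>R d)"
      and f2: "\<forall>d. 0 \<le> f2 d" "b2 = (\<Sum>d\<in>simple. f2 d *\<^sub>R d)" using step bb by meson
    have "b = (\<Sum>d\<in>simple. (f1 d + f2 d) *\<^sub>R d)"
      using bb f1 f2 by (simp add: scaleR_add_left sum.distrib)
    then show ?thesis using f1 f2 by (intro exI[of _ "\<lambda>d. f1 d + f2 d"]) auto
  qed
qed

lemma int_pos_cases: "x \<in> \<int> \<Longrightarrow> x > 0 \<Longrightarrow> x = 1 \<or> x \<ge> (2::real)"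
proof -
  assume "x \<in> \<int>" "x > 0"
  then obtain n where n: "x = of_int n" by (auto elim: Ints_cases)
  then have "n > 0" using \<open>x > 0\<close> by simp
  then have "n = 1 \<or> n \<ge> 2" by linarith
  then show ?thesis using n by auto
qed

lemma simple_obtuse:
  assumes a: "a \<in> simple" and b: "b \<in> simple" and ab: "a \<noteq> b"
  shows "a \<bullet> b \<le> 0"
proof (rule ccontr)
  assume "\<not> a \<bullet> b \<le> 0"
  then have pos: "a \<bullet> b > 0" by simp
  have aR: "a \<in> R" and bR: "b \<in> R" using a b simpleP PR by auto
  have aa: "a \<bullet> a > 0" and bb: "b \<bullet> b > 0" using nz' aR bR by auto
  have i1: "2 * (a \<bullet> b) / (b \<bullet> b) \<in> \<int>" using integ[OF bR aR] .
  have i2: "2 * (b \<bullet> a) / (a \<bullet> a) \<in> \<int>" using integ[OF aR bR] .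
  have p1: "2 * (a \<bullet> b) / (b \<bullet> b) > 0" using pos bb by simp
  have p2: "2 * (b \<bullet> a) / (a \<bullet> a) > 0" using pos aa by (simp add: inner_commute)
  have "a - b \<in> R"
  proof -
    consider "2 * (a \<bullet> b) / (b \<bullet> b) = 1" | "2 * (b \<bullet> a) / (a \<bullet> a) = 1"
      | "2 * (a \<bullet> b) / (b \<bullet> b) \<ge> 2 \<and> 2 * (b \<bullet> a) / (a \<bullet> a) \<ge> 2"
      using int_pos_cases[OF i1 p1] int_pos_cases[OF i2 p2] by blast
    then show ?thesis
    proof cases
      case 1
      then have "refl b a = a - b" by (simp only: refl_eq scaleR_one)
      then show ?thesis using cl[OF bR aR] by simp
    next
      case 2
      then have "refl a b = b - a" by (simp only: refl_eq scaleR_one)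
      then have "b - a \<in> R" using cl[OF aR bR] by simp
      then show ?thesis using negR by fastforce
    next
      case 3
      then have "b \<bullet> b \<le> a \<bullet> b" "a \<bullet> a \<le> a \<bullet> b" using aa bb by (auto simp: field_simps inner_commute)
      then have "(a - b) \<bullet> (a - b) \<le> 0" by (simp add: inner_diff_left inner_diff_right inner_commute)
      then have "a - b = 0" by (metis inner_gt_zero_iff not_less)
      then show ?thesis using ab by simp
    qed
  qed
  show False
  proof (cases "a - b \<in> P")
    case True
    have "a = b + (a - b)" by simp
    then show False using a b True simpleP unfolding simple_def by blast
  next
    case False
    then have "b - a \<in> P" using Rcases[OF \<open>a - b \<in> R\<close>] by simp
    have "b = a + (b - a)" by simp
    then show False using a b \<open>b - a \<in> P\<close> simpleP unfolding simple_def by blast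
  qed
qed

lemma simple_perm:
  assumes a: "a \<in> simple" and b: "b \<in> P" and ba: "b \<noteq> a"
  shows "refl a b \<in> P"
proof (rule ccontr)
  assume nP: "refl a b \<notin> P"
  have aR: "a \<in> R" and bR: "b \<in> R" using a b simpleP PR by auto
  have aa: "a \<bullet> a > 0" using nz' aR by auto
  define k where "k = 2 * (b \<bullet> a) / (a \<bullet> a)"
  have rb: "refl a b = b - k *\<^sub>R a" unfolding refl_eq k_def by simp
  have "- refl a b \<in> P" using Rcases[OF cl[OF aR bR] nP] .
  obtain f where f: "\<forall>d. 0 \<le> f d" "b = (\<Sum>d\<in>simple. f d *\<^sub>R d)" using cone[OF b] by blast
  obtain g where g: "\<forall>d. 0 \<le> g d" "- refl a b = (\<Sum>d\<in>simple. g d *\<^sub>R d)" using cone[OF \<open>- refl a b \<in> P\<close>] by blast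
  define h where "h d = f d + g d" for d
  have h0: "\<forall>d. 0 \<le> h d" using f g unfolding h_def by (simp add: add_nonneg_nonneg)
  have "(\<Sum>d\<in>simple. h d *\<^sub>R d) = b + (- refl a b)"
    unfolding h_def using f g by (simp add: scaleR_add_left sum.distrib)
  also have "\<dots> = k *\<^sub>R a" using rb by simp
  finally have hs: "(\<Sum>d\<in>simple. h d *\<^sub>R d) = k *\<^sub>R a" .
  define S where "S = (\<Sum>d\<in>simple - {a}. h d *\<^sub>R d)"
  have "(\<Sum>d\<in>simple. h d *\<^sub>R d) = h a *\<^sub>R a + S"
    unfolding S_def using a simple_fin by (simp add: sum.remove)
  then have S: "S = (k - h a) *\<^sub>R a" using hs by (simp add: algebra_simps)
  have "S \<bullet> a = (\<Sum>d\<in>simple - {a}. h d * (d \<bullet> a))"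
    unfolding S_def by (simp add: inner_sum_left)
  also have "\<dots> \<le> 0"
  proof (rule sum_nonpos)
    fix d assume "d \<in> simple - {a}"
    then have "d \<bullet> a \<le> 0" using simple_obtuse[of d a] a by auto
    then show "h d * (d \<bullet> a) \<le> 0" using h0 by (simp add: mult_nonneg_nonpos)
  qed
  finally have "(k - h a) * (a \<bullet> a) \<le> 0" using S by simp
  then have t: "k - h a \<le> 0" using aa by (simp add: mult_le_0_iff)
  show False
  proof (cases "\<exists>d\<in>simple - {a}. f d > 0")
    case True
    then obtain d where d: "d \<in> simple - {a}" "f d > 0" by blast
    have "c \<bullet> S = (\<Sum>d\<in>simple - {a}. h d * (c \<bullet> d))"
      unfolding S_def by (simp add: inner_sum_right)
    also have "\<dots> > 0"
    proof (rule sum_pos2)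
      show "finite (simple - {a})" using simple_fin by simp
      show "d \<in> simple - {a}" using d by simp
      show "0 < h d * (c \<bullet> d)" using d Ppos simpleP h_def g(1) by (smt (verit) DiffD1 mult_pos_pos subsetD)
      show "\<And>i. i \<in> simple - {a} \<Longrightarrow> 0 \<le> h i * (c \<bullet> i)"
        using h0 Ppos simpleP by (smt (verit) DiffD1 mult_nonneg_nonneg subsetD)
    qed
    finally have "c \<bullet> S > 0" .
    moreover have "c \<bullet> S = (k - h a) * (c \<bullet> a)" using S by simp
    moreover have "c \<bullet> a > 0" using Ppos a simpleP by blast
    ultimately show False using t by (smt (verit) mult_nonpos_nonneg)
  next
    case False
    have "\<forall>d\<in>simple - {a}. f d = 0"
    proof
      fix d assume "d \<in> simple - {a}"
      then have "\<not> f d > 0" using False by blast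
      then show "f d = 0" using f(1) by (meson antisym not_le)
    qed
    then have "(\<Sum>d\<in>simple - {a}. f d *\<^sub>R d) = 0" by simp
    moreover have "b = f a *\<^sub>R a + (\<Sum>d\<in>simple - {a}. f d *\<^sub>R d)"
      using f(2) a simple_fin by (simp add: sum.remove)
    ultimately have "b = f a *\<^sub>R a" by simp
    then have "f a = 1 \<or> f a = -1" using red[OF aR] bR by simp
    moreover have "- a \<notin> P" using Pneg a simpleP by blast
    ultimately show False using \<open>b = f a *\<^sub>R a\<close> ba b by auto
  qed
qed

lemma simple_neg: "a \<in> simple \<Longrightarrow> b \<in> P \<Longrightarrow> refl a b \<notin> P \<Longrightarrow> b = a"
  using simple_perm by blast

end



context psys begin

lemma simpleR: "simple \<subseteq> R" using simpleP PR by blast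

lemma simple0: "set l \<subseteq> simple \<Longrightarrow> 0 \<notin> set l" using simpleR nz by blast

lemma R0: "set l \<subseteq> R \<Longrightarrow> 0 \<notin> set l" using nz by blast

lemma wdR: "set l \<subseteq> R \<Longrightarrow> x \<in> R \<Longrightarrow> wd l x \<in> R"
  by (rule wd_in[OF cl])

lemma wd_inner: "set l \<subseteq> R \<Longrightarrow> wd l x \<bullet> wd l y = x \<bullet> y"
  using wd_orth[OF R0] unfolding orthogonal_transformation_def by blast

lemma stepA: assumes "b \<in> P" shows "\<exists>l d. set l \<subseteq> simple \<and> d \<in> simple \<and> b = wd l d"
  using assms
proof (induction rule: Pind)
  case (step b)
  show ?case
  proof (cases "b \<in> simple")
    case True then show ?thesis by (intro exI[of _ "[]"] exI[of _ b]) simp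
  next
    case False
    obtain f where f: "\<forall>d. 0 \<le> f d" "b = (\<Sum>d\<in>simple. f d *\<^sub>R d)" using cone[OF step.hyps] by blast
    have bR: "b \<in> R" using step.hyps PR by blast
    have "b \<bullet> b > 0" using nz' bR by simp
    moreover have "b \<bullet> b = (\<Sum>d\<in>simple. f d * (d \<bullet> b))"
      by (subst (1) f(2)) (simp add: inner_sum_left)
    ultimately have "\<not> (\<forall>d\<in>simple. f d * (d \<bullet> b) \<le> 0)"
    proof -
      assume A: "0 < b \<bullet> b" "b \<bullet> b = (\<Sum>d\<in>simple. f d * (d \<bullet> b))"
      show ?thesis
      proof
        assume "\<forall>d\<in>simple. f d * (d \<bullet> b) \<le> 0"
        then have "(\<Sum>d\<in>simple. f d * (d \<bullet> b)) \<le> 0" by (intro sum_nonpos) blast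
        then show False using A by linarith
      qed
    qed
    then have "\<exists>d\<in>simple. f d * (d \<bullet> b) > 0" by (auto simp: not_le)
    then obtain d where d: "d \<in> simple" "f d * (d \<bullet> b) > 0" by blast
    have db: "d \<bullet> b > 0" using d(2) f(1) by (metis zero_less_mult_iff not_le)
    have dR: "d \<in> R" using d simpleR by blast
    have dd: "d \<bullet> d > 0" using nz' dR by simp
    have bd: "b \<noteq> d" using False d by blast
    define g where "g = refl d b"
    have gP: "g \<in> P" unfolding g_def using simple_perm[OF d(1) step.hyps bd] .
    have "c \<bullet> g = c \<bullet> b - (2 * (b \<bullet> d) / (d \<bullet> d)) * (c \<bullet> d)"
      unfolding g_def refl_eq by (simp add: inner_diff_right)
    moreover have "(2 * (b \<bullet> d) / (d \<bullet> d)) * (c \<bullet> d) > 0"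
    proof -
      have "c \<bullet> d > 0" using Ppos[of d] d(1) simpleP by blast
      moreover have "2 * (b \<bullet> d) / (d \<bullet> d) > 0" using db dd by (simp add: inner_commute)
      ultimately show ?thesis by (rule mult_pos_pos[rotated])
    qed
    ultimately have "c \<bullet> g < c \<bullet> b" by linarith
    then obtain l d' where l: "set l \<subseteq> simple" "d' \<in> simple" "g = wd l d'" using step.IH gP by blast
    have "b = refl d g" unfolding g_def using refl_refl[OF nz'[OF dR]] by simp
    then have "b = wd (d # l) d'" using l by simp
    then show ?thesis using l d by (intro exI[of _ "d # l"] exI[of _ d']) auto
  qed
qed

lemma reflword: assumes "b \<in> R" shows "\<exists>l. set l \<subseteq> simple \<and> refl b = wd l"
proof -
  have "\<exists>b'\<in>P. refl b = refl b'"
  proof (cases "b \<in> P")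
    case True then show ?thesis by blast
  next
    case False then show ?thesis using Rcases[OF assms] refl_uminus[of b] by metis
  qed
  then obtain b' where b': "b' \<in> P" "refl b = refl b'" by blast
  obtain l d where l: "set l \<subseteq> simple" "d \<in> simple" "b' = wd l d" using stepA[OF b'(1)] by blast
  have z: "orthogonal_transformation (wd l)" using wd_orth[OF simple0[OF l(1)]] .
  have "refl b' = wd (l @ [d] @ rev l)"
  proof
    fix x
    have "refl b' x = refl (wd l d) (wd l (wd (rev l) x))" using l(3) wd_rev_app2[OF simple0[OF l(1)]] by simp
    also have "\<dots> = wd l (refl d (wd (rev l) x))" using refl_conj[OF z] by simp
    finally show "refl b' x = wd (l @ [d] @ rev l) x" by (simp add: wd_append)
  qed
  then show ?thesis using b' l by (intro exI[of _ "l @ [d] @ rev l"]) auto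
qed

lemma weyl_simple: "v \<in> weyl R \<Longrightarrow> \<exists>l. set l \<subseteq> simple \<and> v = wd l"
proof (induction rule: weyl.induct)
  case weyl_id then show ?case by (intro exI[of _ "[]"]) simp
next
  case (weyl_step a w)
  then obtain l where l: "set l \<subseteq> simple" "w = wd l" by blast
  obtain l1 where l1: "set l1 \<subseteq> simple" "refl a = wd l1" using reflword[OF weyl_step(1)] by blast
  show ?case using l l1 by (intro exI[of _ "l1 @ l"]) (simp add: wd_append)
qed

lemma deletion:
  assumes "set l \<subseteq> simple" "a \<in> simple" "wd l a \<notin> P"
  shows "\<exists>l'. length l' + 1 = length l \<and> set l' \<subseteq> set l \<and> wd l \<circ> refl a = wd l'"
  using assms
proof (induction l)
  case Nil then show ?case using simpleP by auto
next
  case (Cons b l)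
  have bs: "b \<in> simple" and ls: "set l \<subseteq> simple" using Cons.prems by auto
  show ?case
  proof (cases "wd l a \<in> P")
    case False
    then obtain l' where l': "length l' + 1 = length l" "set l' \<subseteq> set l" "wd l \<circ> refl a = wd l'"
      using Cons.IH ls Cons.prems(2) by blast
    have e: "wd (b # l) \<circ> refl a = wd (b # l')" by (metis l'(3) wd.simps(2) comp_assoc)
    have "length (b#l') + 1 = length (b#l)" "set (b#l') \<subseteq> set (b#l)" using l' by auto
    then show ?thesis using e by blast
  next
    case True
    have "refl b (wd l a) \<notin> P" using Cons.prems(3) by simp
    then have e: "wd l a = b" using simple_neg[OF bs True] by blast
    have z: "orthogonal_transformation (wd l)" using wd_orth[OF simple0[OF ls]] .
    have a0: "a \<noteq> 0" using Cons.prems(2) simpleR nz by blast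
    have "wd (b # l) \<circ> refl a = wd l"
    proof
      fix x
      have "(wd (b # l) \<circ> refl a) x = refl (wd l a) (wd l (refl a x))" using e by simp
      also have "\<dots> = wd l (refl a (refl a x))" using refl_conj[OF z] by simp
      also have "\<dots> = wd l x" using refl_refl[OF a0] by simp
      finally show "(wd (b # l) \<circ> refl a) x = wd l x" .
    qed
    moreover have "length l + 1 = length (b#l)" "set l \<subseteq> set (b#l)" by auto
    ultimately show ?thesis by blast
  qed
qed

lemma stab:
  assumes "set l \<subseteq> simple" "\<forall>b\<in>P. wd l b \<in> P"
  shows "wd l = id"
  using assms
proof (induction "length l" arbitrary: l rule: less_induct)
  case less
  show ?case
  proof (cases l rule: rev_exhaust)
    case Nil then show ?thesis by simp
  next
    case (snoc l0 a)
    have a: "a \<in> simple" and l0: "set l0 \<subseteq> simple" using less.prems snoc by auto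
    have a0: "a \<noteq> 0" using a simpleR nz by blast
    have lin: "linear (wd l0)" using wd_orth[OF simple0[OF l0]] unfolding orthogonal_transformation_def by blast
    have "wd l a = wd l0 (refl a a)" using snoc by (simp add: wd_append)
    also have "\<dots> = - wd l0 a" using refl_self[OF a0] linear_neg[OF lin] by simp
    finally have eq: "wd l a = - wd l0 a" .
    have "wd l a \<in> P" using less.prems(2) a simpleP by blast
    then have "- wd l0 a \<in> P" using eq by simp
    then have "wd l0 a \<notin> P" using Pneg by fastforce
    then obtain l' where l': "length l' + 1 = length l0" "set l' \<subseteq> set l0" "wd l0 \<circ> refl a = wd l'"
      using deletion[OF l0 a] by blast
    have e: "wd l = wd l'" using snoc l' by (simp add: wd_append)
    have "wd l' = id"
      using less.hyps[of l'] l' l0 less.prems(2) e snoc by auto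
    then show ?thesis using e by simp
  qed
qed

end



lemma refl_adj: "a \<noteq> 0 \<Longrightarrow> refl a x \<bullet> y = x \<bullet> refl a y"
  by (metis refl_inner refl_refl)

context psys begin

lemma exist:
  assumes "\<forall>a\<in>R. d \<bullet> a \<noteq> 0"
  shows "\<exists>v\<in>weyl R. \<forall>a\<in>R. (0 < v c \<bullet> a \<longleftrightarrow> 0 < d \<bullet> a)"
  using assms
proof (induction "card {a\<in>P. d \<bullet> a < 0}" arbitrary: d rule: less_induct)
  case less
  have finN: "finite {a\<in>P. d \<bullet> a < 0}" using fin PR by (auto intro: finite_subset)
  show ?case
  proof (cases "{a\<in>P. d \<bullet> a < 0} = {}")
    case True
    have "\<forall>a\<in>R. (0 < id c \<bullet> a \<longleftrightarrow> 0 < d \<bullet> a)"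
    proof
      fix a assume aR: "a \<in> R"
      show "(0 < id c \<bullet> a \<longleftrightarrow> 0 < d \<bullet> a)"
      proof (cases "a \<in> P")
        case True
        then have "\<not> d \<bullet> a < 0" using \<open>{a\<in>P. d \<bullet> a < 0} = {}\<close> by blast
        then have "0 < d \<bullet> a" using less.prems aR by (meson linorder_neqE_linordered_idom)
        then show ?thesis using Ppos True by simp
      next
        case False
        then have "- a \<in> P" using Rcases aR by blast
        then have "\<not> d \<bullet> (- a) < 0" using \<open>{a\<in>P. d \<bullet> a < 0} = {}\<close> by blast
        then have "\<not> 0 < d \<bullet> a" using less.prems aR by (simp add: inner_minus_right)
        moreover have "\<not> 0 < c \<bullet> a" using False aR Pdef by blast
        ultimately show ?thesis by simp
      qed
    qed
    then show ?thesis using weyl_id by blast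
  next
    case False
    have "\<exists>e\<in>simple. d \<bullet> e < 0"
    proof (rule ccontr)
      assume "\<not> ?thesis"
      then have nn: "\<forall>e\<in>simple. 0 \<le> d \<bullet> e" by (auto simp: not_less)
      have "\<forall>b\<in>P. \<not> d \<bullet> b < 0"
      proof
        fix b assume b: "b \<in> P"
        obtain f where f: "\<forall>e. 0 \<le> f e" "b = (\<Sum>e\<in>simple. f e *\<^sub>R e)" using cone[OF b] by blast
        have "d \<bullet> b = (\<Sum>e\<in>simple. f e * (d \<bullet> e))" by (subst f(2)) (simp add: inner_sum_right)
        also have "\<dots> \<ge> 0" using f(1) nn by (intro sum_nonneg) simp
        finally show "\<not> d \<bullet> b < 0" by simp
      qed
      then show False using False by blast
    qed
    then obtain e where e: "e \<in> simple" "d \<bullet> e < 0" by blast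
    have eR: "e \<in> R" using e simpleR by blast
    have e0: "e \<noteq> 0" using nz' eR .
    define d' where "d' = refl e d"
    have d'a: "\<And>a. d' \<bullet> a = d \<bullet> refl e a" unfolding d'_def using refl_adj[OF e0] .
    have gen': "\<forall>a\<in>R. d' \<bullet> a \<noteq> 0" using less.prems d'a cl[OF eR] by simp
    have sub: "{a\<in>P. d' \<bullet> a < 0} \<subseteq> refl e ` ({a\<in>P. d \<bullet> a < 0} - {e})"
    proof
      fix a assume a: "a \<in> {a\<in>P. d' \<bullet> a < 0}"
      have ae: "a \<noteq> e"
      proof
        assume "a = e"
        then have "d' \<bullet> a = - (d \<bullet> e)" using d'a refl_self[OF e0] by simp
        then show False using a e(2) by simp
      qed
      have rP: "refl e a \<in> P" using simple_perm[OF e(1) _ ae] a by blast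
      have "refl e a \<noteq> e"
      proof
        assume "refl e a = e"
        then have "a = - e" using refl_refl[OF e0, of a] refl_self[OF e0] by metis
        then show False using a Pneg e(1) simpleP by blast
      qed
      then have "refl e a \<in> {a\<in>P. d \<bullet> a < 0} - {e}" using rP a d'a by auto
      moreover have "a = refl e (refl e a)" using refl_refl[OF e0] by simp
      ultimately show "a \<in> refl e ` ({a\<in>P. d \<bullet> a < 0} - {e})" by blast
    qed
    have "card {a\<in>P. d' \<bullet> a < 0} \<le> card (refl e ` ({a\<in>P. d \<bullet> a < 0} - {e}))"
      using sub finN by (intro card_mono) auto
    also have "\<dots> \<le> card ({a\<in>P. d \<bullet> a < 0} - {e})" by (rule card_image_le) (use finN in auto)
    also have "\<dots> < card {a\<in>P. d \<bullet> a < 0}"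
      using finN e simpleP by (intro card_Diff1_less) auto
    finally have lt: "card {a\<in>P. d' \<bullet> a < 0} < card {a\<in>P. d \<bullet> a < 0}" .
    obtain v' where v': "v' \<in> weyl R" "\<forall>a\<in>R. (0 < v' c \<bullet> a \<longleftrightarrow> 0 < d' \<bullet> a)"
      using less.hyps[OF lt gen'] by blast
    define v where "v = refl e \<circ> v'"
    have vW: "v \<in> weyl R" unfolding v_def using weyl_step[OF eR v'(1)] .
    have "\<forall>a\<in>R. (0 < v c \<bullet> a \<longleftrightarrow> 0 < d \<bullet> a)"
    proof
      fix a assume aR: "a \<in> R"
      have "v c \<bullet> a = v' c \<bullet> refl e a" unfolding v_def using refl_adj[OF e0] by simp
      moreover have "d \<bullet> a = d' \<bullet> refl e a" using d'a refl_refl[OF e0] by simp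
      ultimately show "(0 < v c \<bullet> a \<longleftrightarrow> 0 < d \<bullet> a)" using v'(2) cl[OF eR aR] by simp
    qed
    then show ?thesis using vW by blast
  qed
qed

lemma unique:
  assumes v1: "v1 \<in> weyl R" and v2: "v2 \<in> weyl R"
    and s: "\<forall>a\<in>R. (0 < v1 c \<bullet> a \<longleftrightarrow> 0 < v2 c \<bullet> a)"
  shows "v1 = v2"
proof -
  obtain l1 where l1: "set l1 \<subseteq> simple" "v1 = wd l1" using weyl_simple[OF v1] by blast
  obtain l2 where l2: "set l2 \<subseteq> simple" "v2 = wd l2" using weyl_simple[OF v2] by blast
  have l1R: "set l1 \<subseteq> R" and l2R: "set l2 \<subseteq> R" using l1 l2 simpleR by auto
  have r1R: "set (rev l1) \<subseteq> R" using l1R by simp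
  define u where "u = wd (rev l1 @ l2)"
  have us: "set (rev l1 @ l2) \<subseteq> simple" using l1 l2 by auto
  have "\<forall>b\<in>P. u b \<in> P"
  proof
    fix b assume b: "b \<in> P"
    have bR: "b \<in> R" using b PR by blast
    have xR: "v2 b \<in> R" using wdR[OF l2R bR] l2 by simp
    have "v2 c \<bullet> v2 b = c \<bullet> b" using wd_inner[OF l2R] l2 by simp
    then have "0 < v2 c \<bullet> v2 b" using Ppos[OF b] by simp
    then have pos: "0 < v1 c \<bullet> v2 b" using s xR by blast
    have "c \<bullet> u b = wd (rev l1) (v1 c) \<bullet> wd (rev l1) (v2 b)"
      unfolding u_def using l1 l2 wd_rev_app[OF R0[OF l1R]] by (simp add: wd_append)
    also have "\<dots> = v1 c \<bullet> v2 b" using wd_inner[OF r1R] .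
    finally have "0 < c \<bullet> u b" using pos by simp
    moreover have "u b \<in> R" unfolding u_def using wdR[OF _ bR] l1R l2R by simp
    ultimately show "u b \<in> P" using Pdef by blast
  qed
  then have uid: "u = id" using stab[OF us] unfolding u_def by blast
  show ?thesis
  proof
    fix x
    have "v2 x = wd l1 (u x)"
      unfolding u_def using l2 wd_rev_app2[OF R0[OF l1R]] by (simp add: wd_append)
    then show "v1 x = v2 x" using uid l1 by simp
  qed
qed

lemma inv_wd: "set l \<subseteq> R \<Longrightarrow> inv (wd l) = wd (rev l)"
  using wd_rev[OF R0] by (intro inv_unique_comp) auto

lemma inv_set_wd:
  assumes l: "set l \<subseteq> R"
  shows "inv_set P (wd l) = {a\<in>P. wd l c \<bullet> a < 0}"
proof -
  have rl: "set (rev l) \<subseteq> R" using l by simp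
  have "\<And>a. a \<in> P \<Longrightarrow> (wd (rev l) a \<in> uminus ` P \<longleftrightarrow> wd l c \<bullet> a < 0)"
  proof -
    fix a assume a: "a \<in> P"
    define x where "x = wd (rev l) a"
    have xR: "x \<in> R" unfolding x_def using wdR[OF rl] a PR by blast
    have "wd l c \<bullet> a = wd l c \<bullet> wd l x" unfolding x_def using wd_rev_app2[OF R0[OF l]] by simp
    also have "\<dots> = c \<bullet> x" using wd_inner[OF l] .
    finally have e: "wd l c \<bullet> a = c \<bullet> x" .
    have "x \<in> uminus ` P \<longleftrightarrow> - x \<in> P" by (metis image_iff minus_minus)
    also have "\<dots> \<longleftrightarrow> c \<bullet> x < 0" using negR[OF xR] Pdef by (auto simp: inner_minus_right)
    finally show "wd (rev l) a \<in> uminus ` P \<longleftrightarrow> wd l c \<bullet> a < 0" using e x_def by simp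
  qed
  then show ?thesis unfolding inv_set_def inv_wd[OF l] by blast
qed

lemma sign_iff:
  assumes g1: "\<forall>a\<in>R. d1 \<bullet> a \<noteq> 0" and g2: "\<forall>a\<in>R. d2 \<bullet> a \<noteq> 0"
  shows "{a\<in>P. d1 \<bullet> a < 0} = {a\<in>P. d2 \<bullet> a < 0} \<longleftrightarrow> (\<forall>a\<in>R. (0 < d1 \<bullet> a \<longleftrightarrow> 0 < d2 \<bullet> a))"
proof
  assume eq: "{a\<in>P. d1 \<bullet> a < 0} = {a\<in>P. d2 \<bullet> a < 0}"
  have pP: "0 < d1 \<bullet> a \<longleftrightarrow> 0 < d2 \<bullet> a" if "a \<in> P" for a
  proof -
    have aR: "a \<in> R" using that PR by blast
    have "d1 \<bullet> a < 0 \<longleftrightarrow> d2 \<bullet> a < 0" using eq that by blast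
    then show ?thesis using g1 g2 aR by (meson linorder_neqE_linordered_idom not_less_iff_gr_or_eq)
  qed
  show "\<forall>a\<in>R. (0 < d1 \<bullet> a \<longleftrightarrow> 0 < d2 \<bullet> a)"
  proof
    fix a assume aR: "a \<in> R"
    show "0 < d1 \<bullet> a \<longleftrightarrow> 0 < d2 \<bullet> a"
    proof (cases "a \<in> P")
      case True then show ?thesis using pP by blast
    next
      case False
      then have "- a \<in> P" using Rcases aR by blast
      then have "0 < d1 \<bullet> (-a) \<longleftrightarrow> 0 < d2 \<bullet> (-a)" using pP by blast
      then show ?thesis using g1 g2 aR by (simp add: inner_minus_right) (meson linorder_neqE_linordered_idom not_less_iff_gr_or_eq)
    qed
  qed
next
  assume s: "\<forall>a\<in>R. (0 < d1 \<bullet> a \<longleftrightarrow> 0 < d2 \<bullet> a)"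
  show "{a\<in>P. d1 \<bullet> a < 0} = {a\<in>P. d2 \<bullet> a < 0}"
    using s g1 g2 PR by (auto, (meson linorder_neqE_linordered_idom not_less_iff_gr_or_eq subsetD)+)
qed

end



definition msum :: "'a::euclidean_space set \<Rightarrow> 'a set \<Rightarrow> 'a set" where
  "msum M Y = {x + y | x y. x \<in> M \<and> y \<in> Y}"

definition hyp :: "'a::euclidean_space set set \<Rightarrow> bool" where
  "hyp A \<longleftrightarrow> (\<forall>H\<in>A. \<exists>\<alpha>. \<alpha> \<noteq> 0 \<and> H = hyperplane \<alpha>)"

lemma flats_iff: "X \<in> flats A \<longleftrightarrow> X = \<Inter>{H\<in>A. X \<subseteq> H}"
proof
  assume "X \<in> flats A"
  then obtain S where S: "S \<subseteq> A" "X = \<Inter>S" unfolding flats_def by auto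
  show "X = \<Inter>{H\<in>A. X \<subseteq> H}"
  proof
    show "X \<subseteq> \<Inter>{H\<in>A. X \<subseteq> H}" by auto
    show "\<Inter>{H\<in>A. X \<subseteq> H} \<subseteq> X" using S by auto
  qed
next
  assume "X = \<Inter>{H\<in>A. X \<subseteq> H}"
  then show "X \<in> flats A" unfolding flats_def by blast
qed

lemma flats_Inter: assumes "F \<subseteq> flats A" shows "\<Inter>F \<in> flats A"
proof -
  have "\<Inter>F = \<Inter>{H\<in>A. \<Inter>F \<subseteq> H}"
  proof
    show "\<Inter>F \<subseteq> \<Inter>{H\<in>A. \<Inter>F \<subseteq> H}" by auto
    show "\<Inter>{H\<in>A. \<Inter>F \<subseteq> H} \<subseteq> \<Inter>F"
    proof
      fix x assume x: "x \<in> \<Inter>{H\<in>A. \<Inter>F \<subseteq> H}"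
      show "x \<in> \<Inter>F"
      proof
        fix Y assume Y: "Y \<in> F"
        then have "Y = \<Inter>{H\<in>A. Y \<subseteq> H}" using assms flats_iff by blast
        moreover have "x \<in> \<Inter>{H\<in>A. Y \<subseteq> H}" using x Y by blast
        ultimately show "x \<in> Y" by simp
      qed
    qed
  qed
  then show ?thesis using flats_iff by blast
qed

lemma flats_UNIV: "UNIV \<in> flats A"
  unfolding flats_def by (rule CollectI, rule exI[of _ "{}"]) auto

lemma flats_bot: "\<Inter>A \<in> flats A"
  unfolding flats_def by blast

lemma flats_H: "H \<in> A \<Longrightarrow> H \<in> flats A"
  unfolding flats_def by (rule CollectI, rule exI[of _ "{H}"]) auto

lemma flats_bot_le: "Y \<in> flats A \<Longrightarrow> \<Inter>A \<subseteq> Y"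
  unfolding flats_def by blast

lemma flats_subspace: "hyp A \<Longrightarrow> X \<in> flats A \<Longrightarrow> subspace X"
  unfolding flats_def hyp_def hyperplane_def
  by (force intro!: subspace_Inter simp: subspace_hyperplane)

lemma msum_subspace: "subspace M \<Longrightarrow> subspace Y \<Longrightarrow> subspace (msum M Y)"
  unfolding msum_def by (rule subspace_sums)

lemma msum_le: "subspace Z \<Longrightarrow> M \<subseteq> Z \<Longrightarrow> Y \<subseteq> Z \<Longrightarrow> msum M Y \<subseteq> Z"
  unfolding msum_def by (auto intro: subspace_add)

lemma msum_ge1: "subspace Y \<Longrightarrow> M \<subseteq> msum M Y"
  unfolding msum_def by (force dest: subspace_0)

lemma msum_ge2: "subspace M \<Longrightarrow> Y \<subseteq> msum M Y"
  unfolding msum_def by (force dest: subspace_0)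

lemma msum_mono: "M \<subseteq> M' \<Longrightarrow> msum M Y \<subseteq> msum M' Y"
  unfolding msum_def by blast

lemma grass: "subspace M \<Longrightarrow> subspace Y \<Longrightarrow> dim (msum M Y) + dim (M \<inter> Y) = dim M + dim Y"
  unfolding msum_def by (rule dim_sums_Int)

lemma dimle: "dim (X::'a::euclidean_space set) \<le> DIM('a)"
  by (metis dim_subset_UNIV)

lemma sub_eq: "subspace (S::'a::euclidean_space set) \<Longrightarrow> subspace T \<Longrightarrow> S \<subseteq> T \<Longrightarrow> dim T \<le> dim S \<Longrightarrow> S = T"
  by (rule subspace_dim_equal)

lemma sub_less: "subspace (S::'a::euclidean_space set) \<Longrightarrow> subspace T \<Longrightarrow> S \<subset> T \<Longrightarrow> dim S < dim T"
  by (metis dim_psubset span_eq_iff)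

lemma meet_flat: "flat_meet A M Y \<in> flats A"
  unfolding flat_meet_def by (rule flats_Inter) auto

lemma meet_ge: assumes "hyp A" "subspace M" "subspace Y" shows "msum M Y \<subseteq> flat_meet A M Y"
  unfolding flat_meet_def
  using flats_subspace[OF assms(1)] msum_le by blast

lemma modular_iff:
  assumes h: "hyp A" and M: "M \<in> flats A"
  shows "modular_flat A M \<longleftrightarrow> (\<forall>Y\<in>flats A. msum M Y \<in> flats A)"
proof
  assume mod: "modular_flat A M"
  show "\<forall>Y\<in>flats A. msum M Y \<in> flats A"
  proof
    fix Y assume Y: "Y \<in> flats A"
    have sM: "subspace M" and sY: "subspace Y" using flats_subspace[OF h] M Y by auto
    have eq: "rk M + rk Y = rk (flat_meet A M Y) + rk (M \<inter> Y)"
      using mod Y unfolding modular_flat_def flat_join_def by auto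
    have g: "dim (msum M Y) + dim (M \<inter> Y) = dim M + dim Y" using grass sM sY by blast
    have smeet: "subspace (flat_meet A M Y)" using flats_subspace[OF h meet_flat] .
    have le: "msum M Y \<subseteq> flat_meet A M Y" using meet_ge h sM sY by blast
    have "dim M + dim Y = dim (flat_meet A M Y) + dim (M \<inter> Y)"
      using eq dimle[of M] dimle[of Y] dimle[of "flat_meet A M Y"] dimle[of "M \<inter> Y"]
      unfolding rk_def by linarith
    then have "dim (flat_meet A M Y) \<le> dim (msum M Y)" using g by linarith
    then have "msum M Y = flat_meet A M Y"
      using sub_eq[OF msum_subspace[OF sM sY] smeet le] by blast
    then show "msum M Y \<in> flats A" using meet_flat by metis
  qed
next
  assume all: "\<forall>Y\<in>flats A. msum M Y \<in> flats A"
  show "modular_flat A M" unfolding modular_flat_def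
  proof (intro conjI M ballI)
    fix Y assume Y: "Y \<in> flats A"
    have sM: "subspace M" and sY: "subspace Y" using flats_subspace[OF h] M Y by auto
    have le: "msum M Y \<subseteq> flat_meet A M Y" using meet_ge h sM sY by blast
    have "flat_meet A M Y \<subseteq> msum M Y"
      unfolding flat_meet_def using all Y msum_ge1[OF sY] msum_ge2[OF sM] by blast
    then have e: "flat_meet A M Y = msum M Y" using le by blast
    have g: "dim (msum M Y) + dim (M \<inter> Y) = dim M + dim Y" using grass sM sY by blast
    show "rk M + rk Y = rk (flat_meet A M Y) + rk (flat_join M Y)"
      unfolding e rk_def flat_join_def
      using g dimle[of M] dimle[of Y] dimle[of "msum M Y"] dimle[of "M \<inter> Y"] by linarith
  qed
qed

lemma chain_add:
  assumes "maximal_chain A C" "Z \<in> flats A" "\<forall>M\<in>C. M \<subseteq> Z \<or> Z \<subseteq> M"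
  shows "Z \<in> C"
proof -
  have "insert Z C \<subseteq> flats A" "flat_chain (insert Z C)"
    using assms unfolding maximal_chain_def flat_chain_def by auto
  then have "insert Z C = C" using assms(1) unfolding maximal_chain_def by blast
  then show ?thesis by blast
qed

lemma max_chain_dims:
  fixes A :: "'a::euclidean_space set set"
  assumes h: "hyp A" and mc: "maximal_chain A C" and k1: "dim (\<Inter>A) \<le> k" and k2: "k \<le> DIM('a)"
  shows "\<exists>M\<in>C. dim M = k"
proof (rule ccontr)
  assume nok: "\<not> (\<exists>M\<in>C. dim M = k)"
  have CF: "C \<subseteq> flats A" and ch: "flat_chain C" using mc unfolding maximal_chain_def by auto
  have sub: "\<And>M. M \<in> C \<Longrightarrow> subspace M" using CF flats_subspace[OF h] by blast
  have botC: "\<Inter>A \<in> C" using chain_add[OF mc flats_bot] flats_bot_le CF by blast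
  have topC: "UNIV \<in> C" using chain_add[OF mc flats_UNIV] by blast
  have "dim (\<Inter>A) \<noteq> k" using botC nok by blast
  have "dim (UNIV::'a set) \<noteq> k" using topC nok by blast
  then have kD: "k < DIM('a)" using k2 by simp
  have klo: "dim (\<Inter>A) < k" using k1 \<open>dim (\<Inter>A) \<noteq> k\<close> by simp
  obtain M2 where M2: "M2 \<in> C \<and> k < dim M2" and M2min: "\<forall>N. N \<in> C \<and> k < dim N \<longrightarrow> dim M2 \<le> dim N"
    using ex_has_least_nat[of "\<lambda>N. N \<in> C \<and> k < dim N" UNIV dim] topC kD by auto
  obtain M1 where M1: "M1 \<in> C \<and> dim M1 < k" and M1max: "\<forall>N. N \<in> C \<and> dim N < k \<longrightarrow> DIM('a) - dim M1 \<le> DIM('a) - dim N"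
    using ex_has_least_nat[of "\<lambda>N. N \<in> C \<and> dim N < k" "\<Inter>A" "\<lambda>N. DIM('a) - dim N"] botC klo by auto
  have up: "M2 \<subseteq> N" if "N \<in> C" "k < dim N" for N
  proof (rule ccontr)
    assume "\<not> M2 \<subseteq> N"
    then have "N \<subset> M2" using ch that M2 unfolding flat_chain_def by blast
    then have "dim N < dim M2" using sub_less sub that M2 by blast
    then show False using M2min that by force
  qed
  have down: "N \<subseteq> M1" if "N \<in> C" "dim N < k" for N
  proof (rule ccontr)
    assume "\<not> N \<subseteq> M1"
    then have "M1 \<subset> N" using ch that M1 unfolding flat_chain_def by blast
    then have "dim M1 < dim N" using sub_less sub that M1 by blast
    then show False using M1max that dimle[of N] by force
  qed
  have M12: "M1 \<subseteq> M2"
  proof -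
    have "M1 \<subseteq> M2 \<or> M2 \<subseteq> M1" using ch M1 M2 unfolding flat_chain_def by blast
    moreover have "\<not> M2 \<subseteq> M1"
    proof
      assume "M2 \<subseteq> M1"
      then have "dim M2 \<le> dim M1" by (rule dim_subset)
      then show False using M1 M2 by linarith
    qed
    ultimately show ?thesis by blast
  qed
  have "M1 \<in> flats A" using M1 CF by blast
  then have M1eq: "M1 = \<Inter>{H\<in>A. M1 \<subseteq> H}" using flats_iff by blast
  have "\<exists>H\<in>A. M1 \<subseteq> H \<and> \<not> M2 \<subseteq> H"
  proof (rule ccontr)
    assume "\<not> ?thesis"
    then have "M2 \<subseteq> M1" using M1eq by blast
    then have "dim M2 \<le> dim M1" by (rule dim_subset)
    then show False using M1 M2 by linarith
  qed
  then obtain H where H: "H \<in> A" "M1 \<subseteq> H" "\<not> M2 \<subseteq> H" by blast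
  obtain \<alpha> where \<alpha>: "\<alpha> \<noteq> 0" "H = hyperplane \<alpha>" using h H(1) unfolding hyp_def by blast
  define Z where "Z = M2 \<inter> H"
  have ZF: "Z \<in> flats A" unfolding Z_def using flats_Inter[of "{M2, H}" A] flats_H[OF H(1)] M2 CF by auto
  have "\<forall>N\<in>C. N \<subseteq> Z \<or> Z \<subseteq> N"
  proof
    fix N assume N: "N \<in> C"
    have "dim N \<noteq> k" using nok N by blast
    then show "N \<subseteq> Z \<or> Z \<subseteq> N"
    proof (cases "dim N < k")
      case True
      then have "N \<subseteq> M1" using down[OF N] by blast
      then show ?thesis using M12 H(2) unfolding Z_def by blast
    next
      case False
      then have "k < dim N" using \<open>dim N \<noteq> k\<close> by linarith
      then have "M2 \<subseteq> N" using up[OF N] by blast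
      then show ?thesis unfolding Z_def by blast
    qed
  qed
  then have ZC: "Z \<in> C" using chain_add[OF mc ZF] by blast
  have sH: "subspace H" using flats_subspace[OF h flats_H[OF H(1)]] .
  have dH: "dim H = DIM('a) - 1" using \<alpha> dim_hyperplane unfolding hyperplane_def by blast
  have "dim (msum M2 H) + dim Z = dim M2 + dim H"
    unfolding Z_def using grass sub M2 sH by blast
  then have "dim M2 \<le> dim Z + 1" using dimle[of "msum M2 H"] dH DIM_positive[where 'a='a] by linarith
  then have "k \<le> dim Z" using M2 by linarith
  then have "k < dim Z" using nok ZC by (metis le_neq_implies_less)
  then have "dim M2 \<le> dim Z" using M2min ZC by blast
  moreover have "Z \<subset> M2" using H(3) unfolding Z_def by blast
  then have "dim Z < dim M2" using sub_less sub ZC M2 by blast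
  ultimately show False by linarith
qed

lemma chain_dims_maximal:
  fixes A :: "'a::euclidean_space set set"
  assumes h: "hyp A" and CF: "C \<subseteq> flats A" and ch: "flat_chain C"
    and dims: "\<And>k. dim (\<Inter>A) \<le> k \<Longrightarrow> k \<le> DIM('a) \<Longrightarrow> \<exists>M\<in>C. dim M = k"
  shows "maximal_chain A C"
  unfolding maximal_chain_def
proof (intro conjI CF ch allI impI)
  fix C' assume C': "C \<subseteq> C' \<and> C' \<subseteq> flats A \<and> flat_chain C'"
  show "C' = C"
  proof
    show "C \<subseteq> C'" using C' by blast
    show "C' \<subseteq> C"
    proof
      fix Z assume Z: "Z \<in> C'"
      have ZF: "Z \<in> flats A" using C' Z by blast
      obtain M where M: "M \<in> C" "dim M = dim Z"
      proof -
        have "dim (\<Inter>A) \<le> dim Z" using dim_subset[OF flats_bot_le[OF ZF]] .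
        then show ?thesis using dims[of "dim Z"] dimle[of Z] that by blast
      qed
      have sM: "subspace M" and sZ: "subspace Z" using flats_subspace[OF h] ZF M CF by blast+
      have "M \<subseteq> Z \<or> Z \<subseteq> M" using C' Z M unfolding flat_chain_def by blast
      then have "M = Z" using sub_eq[OF sM sZ] sub_eq[OF sZ sM] M(2) by auto
      then show "Z \<in> C" using M by simp
    qed
  qed
qed

lemma nat_ivt:
  fixes f :: "nat \<Rightarrow> nat"
  assumes "a \<le> b" "f a \<le> k" "k \<le> f b" "\<And>j. a \<le> j \<Longrightarrow> j < b \<Longrightarrow> f (Suc j) \<le> Suc (f j)"
  shows "\<exists>j. a \<le> j \<and> j \<le> b \<and> f j = k"
  using assms
proof (induction b)
  case 0 then show ?case by auto
next
  case (Suc b)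
  show ?case
  proof (cases "a = Suc b")
    case True then show ?thesis using Suc.prems by auto
  next
    case False
    then have ab: "a \<le> b" using Suc.prems by simp
    show ?thesis
    proof (cases "k \<le> f b")
      case True
      then show ?thesis using Suc.IH[OF ab Suc.prems(2) True] Suc.prems(4) by force
    next
      case False
      then have "f (Suc b) = k" using Suc.prems(3) Suc.prems(4)[of b] ab by simp
      then show ?thesis using Suc.prems(1) by blast
    qed
  qed
qed

lemma flats_local:
  assumes BA: "B \<subseteq> A" and cl: "\<And>H. H \<in> A \<Longrightarrow> \<Inter>B \<subseteq> H \<Longrightarrow> H \<in> B"
  shows "Y \<in> flats B \<longleftrightarrow> Y \<in> flats A \<and> \<Inter>B \<subseteq> Y"
proof
  assume "Y \<in> flats B"
  then obtain S where "S \<subseteq> B" "Y = \<Inter>S" unfolding flats_def by auto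
  then show "Y \<in> flats A \<and> \<Inter>B \<subseteq> Y" using BA unfolding flats_def by blast
next
  assume Y: "Y \<in> flats A \<and> \<Inter>B \<subseteq> Y"
  then have "Y = \<Inter>{H\<in>A. Y \<subseteq> H}" using flats_iff by blast
  moreover have "{H\<in>A. Y \<subseteq> H} = {H\<in>B. Y \<subseteq> H}" using Y cl BA by blast
  ultimately have "Y = \<Inter>{H\<in>B. Y \<subseteq> H}" by simp
  then show "Y \<in> flats B" using flats_iff by blast
qed

lemma local_supersolvable:
  fixes A :: "'a::euclidean_space set set"
  assumes h: "hyp A" and BA: "B \<subseteq> A" and cl: "\<And>H. H \<in> A \<Longrightarrow> \<Inter>B \<subseteq> H \<Longrightarrow> H \<in> B"
    and ss: "supersolvable A"
  shows "supersolvable B"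
proof -
  define X where "X = \<Inter>B"
  have hB: "hyp B" using h BA unfolding hyp_def by blast
  have fB: "\<And>Y. Y \<in> flats B \<longleftrightarrow> Y \<in> flats A \<and> X \<subseteq> Y" using flats_local[OF BA cl] X_def by blast
  have XA: "X \<in> flats A" using fB[of X] flats_bot[of B] X_def by blast
  have sX: "subspace X" using flats_subspace[OF h XA] .
  obtain C where mc: "maximal_chain A C" and modC: "\<forall>M\<in>C. modular_flat A M"
    using ss unfolding supersolvable_def by blast
  have CF: "C \<subseteq> flats A" and ch: "flat_chain C" using mc unfolding maximal_chain_def by auto
  have sub: "\<And>M. M \<in> C \<Longrightarrow> subspace M" using CF flats_subspace[OF h] by blast
  have sumF: "\<And>M Y. M \<in> C \<Longrightarrow> Y \<in> flats A \<Longrightarrow> msum M Y \<in> flats A"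
    using modC modular_iff[OF h] CF by blast
  define C' where "C' = (\<lambda>M. msum M X) ` C"
  have C'F: "C' \<subseteq> flats B"
  proof
    fix N assume "N \<in> C'"
    then obtain M where M: "M \<in> C" "N = msum M X" unfolding C'_def by blast
    show "N \<in> flats B" using fB sumF[OF M(1) XA] msum_ge2[OF sub[OF M(1)]] M(2) by blast
  qed
  have ch': "flat_chain C'"
    unfolding flat_chain_def C'_def
  proof (intro ballI)
    fix N1 N2 assume "N1 \<in> (\<lambda>M. msum M X) ` C" "N2 \<in> (\<lambda>M. msum M X) ` C"
    then obtain M1 M2 where "M1 \<in> C" "M2 \<in> C" "N1 = msum M1 X" "N2 = msum M2 X" by blast
    then show "N1 \<subseteq> N2 \<or> N2 \<subseteq> N1" using ch msum_mono[of M1 M2 X] msum_mono[of M2 M1 X]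
      unfolding flat_chain_def by blast
  qed
  have mod': "\<forall>N\<in>C'. modular_flat B N"
  proof
    fix N assume N: "N \<in> C'"
    then obtain M where M: "M \<in> C" "N = msum M X" unfolding C'_def by blast
    have NB: "N \<in> flats B" using C'F N by blast
    show "modular_flat B N" unfolding modular_iff[OF hB NB]
    proof
      fix Y assume Y: "Y \<in> flats B"
      have YA: "Y \<in> flats A" and XY: "X \<subseteq> Y" using fB Y by auto
      have sY: "subspace Y" using flats_subspace[OF h YA] .
      have "msum N Y = msum M Y"
      proof
        show "msum N Y \<subseteq> msum M Y"
          unfolding M(2) using msum_le[OF msum_subspace[OF sub[OF M(1)] sY]]
            msum_ge1[OF sY, of M] msum_ge2[OF sub[OF M(1)], of Y] XY msum_le
          by (metis msum_subspace order.trans sub[OF M(1)] sX)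
        show "msum M Y \<subseteq> msum N Y"
          unfolding M(2) by (rule msum_mono[OF msum_ge1[OF sX]])
      qed
      moreover have "msum M Y \<in> flats B"
        using fB sumF[OF M(1) YA] msum_ge2[OF sub[OF M(1)], of Y] XY by blast
      ultimately show "msum N Y \<in> flats B" by simp
    qed
  qed
  have botC: "\<Inter>A \<in> C" using chain_add[OF mc flats_bot] flats_bot_le CF by blast
  define d0 where "d0 = dim (\<Inter>A)"
  define Mj where "Mj j = (SOME M. M \<in> C \<and> dim M = j)" for j
  have Mj: "Mj j \<in> C \<and> dim (Mj j) = j" if "d0 \<le> j" "j \<le> DIM('a)" for j
    unfolding Mj_def using max_chain_dims[OF h mc, of j] that d0_def by (metis (mono_tags, lifting) someI)
  define f where "f j = dim (msum (Mj j) X)" for j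
  have d0D: "d0 \<le> DIM('a)" unfolding d0_def by (rule dimle)
  have f0: "f d0 = dim X"
  proof -
    have M0: "Mj d0 \<in> C" "dim (Mj d0) = d0" using Mj[OF order.refl d0D] by auto
    have "\<Inter>A \<subseteq> Mj d0" using flats_bot_le M0 CF by blast
    then have "Mj d0 = \<Inter>A" using sub_eq[OF sub[OF botC] sub[OF M0(1)]] M0(2) d0_def by simp
    then have "Mj d0 \<subseteq> X" using flats_bot_le[OF XA] by simp
    then have "msum (Mj d0) X = X" using msum_le[OF sX _ order.refl] msum_ge2[OF sub[OF M0(1)]] by blast
    then show ?thesis unfolding f_def by simp
  qed
  have fD: "f DIM('a) = DIM('a)"
  proof -
    have M0: "Mj DIM('a) \<in> C" "dim (Mj DIM('a)) = DIM('a)" using Mj[OF d0D order.refl] by auto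
    have "Mj DIM('a) = UNIV" using sub_eq[OF sub[OF M0(1)] subspace_UNIV] M0(2) by simp
    then have "msum (Mj DIM('a)) X = UNIV" using msum_ge1[OF sX, of UNIV] by auto
    then show ?thesis unfolding f_def by simp
  qed
  have fstep: "f (Suc j) \<le> Suc (f j)" if "d0 \<le> j" "j < DIM('a)" for j
  proof -
    have a: "Mj j \<in> C" "dim (Mj j) = j" using Mj that by auto
    have b: "Mj (Suc j) \<in> C" "dim (Mj (Suc j)) = Suc j" using Mj that by auto
    have "Mj j \<subseteq> Mj (Suc j) \<or> Mj (Suc j) \<subseteq> Mj j" using ch a b unfolding flat_chain_def by blast
    moreover have "\<not> Mj (Suc j) \<subseteq> Mj j" using dim_subset[of "Mj (Suc j)" "Mj j"] a b by auto
    ultimately have le: "Mj j \<subseteq> Mj (Suc j)" by blast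
    have g1: "f j + dim (Mj j \<inter> X) = j + dim X" using grass[OF sub[OF a(1)] sX] a unfolding f_def by simp
    have g2: "f (Suc j) + dim (Mj (Suc j) \<inter> X) = Suc j + dim X" using grass[OF sub[OF b(1)] sX] b unfolding f_def by simp
    have "dim (Mj j \<inter> X) \<le> dim (Mj (Suc j) \<inter> X)" using le by (intro dim_subset) blast
    then show ?thesis using g1 g2 by linarith
  qed
  have dims: "\<exists>N\<in>C'. dim N = k" if kk1: "dim (\<Inter>B) \<le> k" and kk2: "k \<le> DIM('a)" for k
  proof -
    obtain j where j: "d0 \<le> j" "j \<le> DIM('a)" "f j = k"
    proof -
      have "f d0 \<le> k" using f0 kk1 X_def by simp
      moreover have "k \<le> f DIM('a)" using fD kk2 by simp
      ultimately show ?thesis using nat_ivt[of d0 "DIM('a)" f k] d0D fstep that by blast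
    qed
    then show ?thesis using Mj[OF j(1,2)] unfolding f_def C'_def by blast
  qed
  have "maximal_chain B C'" by (rule chain_dims_maximal[OF hB C'F ch' dims]) 
  then show ?thesis using mod' unfolding supersolvable_def by blast
qed




theorem mainTheorem14:
  fixes R P U :: "'a::euclidean_space set" and w :: "'a \<Rightarrow> 'a"
  assumes "root_system R"
    and "positive_system R P"
    and "w \<in> weyl R"
    and "subspace U"
    and "supersolvable (inv_arrangement P w)"
  shows "supersolvable (inv_arrangement (P \<inter> U) (flat_U R P U w))"
proof -
  have fin: "finite R" and nz: "0 \<notin> R" and cl: "\<And>a b. a \<in> R \<Longrightarrow> b \<in> R \<Longrightarrow> refl a b \<in> R"
    and integ: "\<And>a b. a \<in> R \<Longrightarrow> b \<in> R \<Longrightarrow> 2 * (b \<bullet> a) / (a \<bullet> a) \<in> \<int>"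
    and red: "\<And>a t. a \<in> R \<Longrightarrow> t *\<^sub>R a \<in> R \<Longrightarrow> t = 1 \<or> t = -1"
    using assms(1) unfolding root_system_def by blast+
  obtain c where gen: "\<And>a. a \<in> R \<Longrightarrow> c \<bullet> a \<noteq> 0" and Pdef: "P = {a \<in> R. c \<bullet> a > 0}"
    using assms(2) unfolding positive_system_def by blast
  interpret full: psys R P c
    using fin nz cl integ red gen Pdef by unfold_locales blast+
  have clU: "refl a b \<in> R \<inter> U" if "a \<in> R \<inter> U" "b \<in> R \<inter> U" for a b
  proof -
    have "refl a b = b - (2 * (b \<bullet> a) / (a \<bullet> a)) *\<^sub>R a" by (rule refl_eq)
    then have "refl a b \<in> U" using that assms(4) by (simp add: subspace_diff subspace_scale)
    then show ?thesis using cl that by blast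
  qed
  interpret sub: psys "R \<inter> U" "P \<inter> U" c
  proof unfold_locales
    show "finite (R \<inter> U)" using fin by simp
    show "0 \<notin> R \<inter> U" using nz by simp
    show "\<And>a b. a \<in> R \<inter> U \<Longrightarrow> b \<in> R \<inter> U \<Longrightarrow> refl a b \<in> R \<inter> U" by (rule clU)
    show "\<And>a b. a \<in> R \<inter> U \<Longrightarrow> b \<in> R \<inter> U \<Longrightarrow> 2 * (b \<bullet> a) / (a \<bullet> a) \<in> \<int>" using integ by blast
    show "\<And>a t. a \<in> R \<inter> U \<Longrightarrow> t *\<^sub>R a \<in> R \<inter> U \<Longrightarrow> t = 1 \<or> t = -1" using red by blast
    show "\<And>a. a \<in> R \<inter> U \<Longrightarrow> c \<bullet> a \<noteq> 0" using gen by blast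
    show "P \<inter> U = {a \<in> R \<inter> U. c \<bullet> a > 0}" using Pdef by blast
  qed
  obtain lw where lw: "set lw \<subseteq> R" "w = wd lw" using weyl_wd[OF assms(3)] by blast
  define d where "d = w c"
  have genv: "\<forall>a\<in>R. wd l c \<bullet> a \<noteq> 0" if l: "set l \<subseteq> R" for l
  proof
    fix a assume aR: "a \<in> R"
    have "wd l c \<bullet> a = wd l c \<bullet> wd l (wd (rev l) a)" using wd_rev_app2[OF full.R0[OF l]] by simp
    also have "\<dots> = c \<bullet> wd (rev l) a" using full.wd_inner[OF l] .
    finally show "wd l c \<bullet> a \<noteq> 0" using gen full.wdR[of "rev l" a] l aR by simp
  qed
  have gd: "\<forall>a\<in>R \<inter> U. d \<bullet> a \<noteq> 0" using genv[OF lw(1)] lw(2) d_def by simp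
  define I where "I = inv_set P w"
  have I: "I = {a\<in>P. d \<bullet> a < 0}" unfolding I_def d_def lw(2) by (rule full.inv_set_wd[OF lw(1)])
  have IU: "I \<inter> U = {a\<in>P \<inter> U. d \<bullet> a < 0}" using I by blast
  define Q where "Q v \<longleftrightarrow> v \<in> weyl (R \<inter> U) \<and> inv_set (P \<inter> U) v = I \<inter> U" for v
  have Qiff: "Q v \<longleftrightarrow> v \<in> weyl (R \<inter> U) \<and> (\<forall>a\<in>R \<inter> U. (0 < v c \<bullet> a \<longleftrightarrow> 0 < d \<bullet> a))" for v
  proof (cases "v \<in> weyl (R \<inter> U)")
    case True
    obtain lv where lv: "set lv \<subseteq> R \<inter> U" "v = wd lv" using weyl_wd[OF True] by blast
    have "inv_set (P \<inter> U) v = {a\<in>P \<inter> U. v c \<bullet> a < 0}" using sub.inv_set_wd[OF lv(1)] lv(2) by simp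
    moreover have "\<forall>a\<in>R \<inter> U. v c \<bullet> a \<noteq> 0" using genv[of lv] lv by auto
    ultimately show ?thesis unfolding Q_def using True IU sub.sign_iff[OF _ gd] by simp
  next
    case False then show ?thesis unfolding Q_def by simp
  qed
  have ex1: "\<exists>!v. Q v"
  proof -
    obtain v where v: "v \<in> weyl (R \<inter> U)" "\<forall>a\<in>R \<inter> U. (0 < v c \<bullet> a \<longleftrightarrow> 0 < d \<bullet> a)"
      using sub.exist[OF gd] by blast
    show ?thesis
    proof (rule ex1I[of _ v])
      show "Q v" using v Qiff by blast
      fix v' assume "Q v'"
      then have v': "v' \<in> weyl (R \<inter> U)" "\<forall>a\<in>R \<inter> U. (0 < v' c \<bullet> a \<longleftrightarrow> 0 < d \<bullet> a)" using Qiff by blast+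
      show "v' = v" using sub.unique[OF v'(1) v(1)] v'(2) v(2) by blast
    qed
  qed
  have "Q (flat_U R P U w)" unfolding flat_U_def I_def[symmetric]
    using theI'[OF ex1] unfolding Q_def by simp
  then have arr: "inv_arrangement (P \<inter> U) (flat_U R P U w) = hyperplane ` (I \<inter> U)"
    unfolding Q_def inv_arrangement_def by simp
  define A where "A = hyperplane ` I"
  define B where "B = hyperplane ` (I \<inter> U)"
  have IP: "I \<subseteq> P" unfolding I_def inv_set_def by blast
  have hA: "hyp A" unfolding hyp_def A_def
  proof
    fix H assume "H \<in> hyperplane ` I"
    then obtain a where a: "a \<in> I" "H = hyperplane a" by blast
    then have "a \<noteq> 0" using IP full.PR nz by blast
    then show "\<exists>\<alpha>. \<alpha> \<noteq> 0 \<and> H = hyperplane \<alpha>" using a by blast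
  qed
  have BA: "B \<subseteq> A" unfolding A_def B_def by blast
  have clB: "H \<in> B" if H: "H \<in> A" "\<Inter>B \<subseteq> H" for H
  proof -
    obtain b where b: "b \<in> I" "H = hyperplane b" using H(1) unfolding A_def by blast
    obtain y z where yz: "y \<in> span (I \<inter> U)" "\<And>w. w \<in> span (I \<inter> U) \<Longrightarrow> orthogonal z w" "b = y + z"
      using orthogonal_subspace_decomp_exists[of "I \<inter> U" b] by metis
    have "z \<in> \<Inter>B"
    proof
      fix G assume "G \<in> B"
      then obtain a where a: "a \<in> I \<inter> U" "G = hyperplane a" unfolding B_def by blast
      have "orthogonal z a" using yz(2) a(1) span_base by blast
      then show "z \<in> G" using a(2) unfolding hyperplane_def orthogonal_def by (simp add: inner_commute)
    qed
    then have "b \<bullet> z = 0" using H(2) b(2) unfolding hyperplane_def by blast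
    moreover have "y \<bullet> z = 0" using yz(2)[OF yz(1)] unfolding orthogonal_def by (simp add: inner_commute)
    ultimately have "z \<bullet> z = 0" using yz(3) by (simp add: inner_add_left)
    then have "b = y" using yz(3) by simp
    then have "b \<in> U" using yz(1) span_minimal[OF _ assms(4), of "I \<inter> U"] by blast
    then show ?thesis using b unfolding B_def by blast
  qed
  have "supersolvable A" using assms(5) unfolding A_def I_def inv_arrangement_def .
  then have "supersolvable B" using local_supersolvable[OF hA BA] clB by blast
  then show ?thesis using arr B_def by simp
qed


end
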